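(* For any $L,L'\in\mathcal{L}$ and any $\gamma$-point, the 1-form $\operatorname{tr}(L\,dL')$ has at most a simple pole at $\gamma$, and $\operatorname{res}_\gamma\operatorname{tr}(L\,dL')=2(\kappa_1+\kappa_2)([L,L'])$.
   Context: $\mathfrak{g}=G_2$ is realized as $7\times7$ matrices $\begin{pmatrix} 0 & -\sqrt{2}a_2^t & -\sqrt{2}a_1^t \\ \sqrt{2}a_1 & A & [a_2] \\ \sqrt{2}a_2 & [a_1] & -A^t \end{pmatrix}$ ($a_i\in\mathbb{C}^3$, $A$ traceless $3\times3$, $[x]$ the skew-symmetric matrix with $[x]y=x\times y$). $\mathcal{L}$ is the Lie algebra (pointwise commutator) of $\mathfrak{g}$-valued meromorphic functions on a Riemann surface with marked points $P_i,Q_j,\gamma_s$, holomorphic outside them, such that at each $\gamma$ (with fixed $\alpha_1,\alpha_2\in\mathbb{C}^3$, $\alpha_1^t\alpha_2=0$, and local coordinate $z$) $L=L_{-2}z^{-2}+L_{-1}z^{-1}+L_0+L_1z+\ldots$ with $L_{-2}=\mu\,\mathrm{diag}(0,\alpha_1\alpha_2^t,-\alpha_2\alpha_1^t)$; $L_{-1}=\begin{pmatrix} 0 & -\sqrt{2}\beta_{02}\alpha_2^t & -\sqrt{2}\beta_{01}\alpha_1^t \\ \sqrt{2}\beta_{01}\alpha_1 & \alpha_1\beta_2^t-\beta_1\alpha_2^t & \beta_{02}[\alpha_2] \\ \sqrt{2}\beta_{02}\alpha_2 & \beta_{01}[\alpha_1] & \alpha_2\beta_1^t-\beta_2\alpha_1^t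 \end{pmatrix}$ with $\alpha_1^t\beta_2=\alpha_2^t\beta_1=0$; $L_0$ with entries $a_1,a_2,A$ satisfying $\alpha_1^ta_2=\alpha_2^ta_1=0$, $A\alpha_1=\kappa_1\alpha_1$, $-A^t\alpha_2=\kappa_2\alpha_2$; and the $(2,2)$ block $B$ of $L_1$ satisfying $\alpha_2^tB\alpha_1=0$. For $L\in\mathcal{L}$, $\kappa_1(L),\kappa_2(L)$ denote these eigenvalues $\kappa_1,\kappa_2$ of $L_0$ at $\gamma$, and $(\kappa_1+\kappa_2)(L)=\kappa_1(L)+\kappa_2(L)$. *)

theory Defs
  imports "HOL-Analysis.Analysis" "HOL-Computational_Algebra.Formal_Laurent_Series"
begin

text \<open>Index set of the 7x7 matrices, split into blocks of sizes 1, 3, 3.\<close>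
type_synonym idx7 = "unit + (3 + 3)"

text \<open>Bilinear (non-Hermitian) pairing x^t y on complex 3-vectors.\<close>
definition dotc :: "complex^3 \<Rightarrow> complex^3 \<Rightarrow> complex" where
  "dotc x y = (\<Sum>i\<in>UNIV. x$i * y$i)"

definition outer :: "complex^3 \<Rightarrow> complex^3 \<Rightarrow> complex^3^3" where
  "outer x y = (\<chi> i j. x$i * y$j)"

text \<open>The skew-symmetric matrix [x] with [x] y = x \<times> y.\<close>
definition crossmat :: "complex^3 \<Rightarrow> complex^3^3" where
  "crossmat x = (\<chi> i j.
     if i = 1 then (if j = 1 then 0 else if j = 2 then - x$3 else x$2)
     else if i = 2 then (if j = 1 then x$3 else if j = 2 then 0 else - x$1)
     else (if j = 1 then - x$2 else if j = 2 then x$1 else 0))"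

text \<open>Block matrix
  ( c   r1^t  r2^t )
  ( c1  M11   M12  )
  ( c2  M21   M22  ).\<close>
definition blk :: "complex \<Rightarrow> complex^3 \<Rightarrow> complex^3 \<Rightarrow>
    complex^3 \<Rightarrow> complex^3^3 \<Rightarrow> complex^3^3 \<Rightarrow>
    complex^3 \<Rightarrow> complex^3^3 \<Rightarrow> complex^3^3 \<Rightarrow> complex^idx7^idx7" where
  "blk c r1 r2 c1 M11 M12 c2 M21 M22 = (\<chi> i j.
     (case i of
        Inl _ \<Rightarrow> (case j of Inl _ \<Rightarrow> c | Inr (Inl q) \<Rightarrow> r1$q | Inr (Inr q) \<Rightarrow> r2$q)
      | Inr (Inl p) \<Rightarrow> (case j of Inl _ \<Rightarrow> c1$p | Inr (Inl q) \<Rightarrow> M11$p$q | Inr (Inr q) \<Rightarrow> M12$p$q)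
      | Inr (Inr p) \<Rightarrow> (case j of Inl _ \<Rightarrow> c2$p | Inr (Inl q) \<Rightarrow> M21$p$q | Inr (Inr q) \<Rightarrow> M22$p$q)))"

definition blk22 :: "complex^idx7^idx7 \<Rightarrow> complex^3^3" where
  "blk22 M = (\<chi> p q. M $ Inr (Inl p) $ Inr (Inl q))"

abbreviation sq2 :: complex where "sq2 \<equiv> complex_of_real (sqrt 2)"

definition g2elt :: "complex^3 \<Rightarrow> complex^3 \<Rightarrow> complex^3^3 \<Rightarrow> complex^idx7^idx7" where
  "g2elt a1 a2 A = blk 0 (- (sq2 *s a2)) (- (sq2 *s a1))
                        (sq2 *s a1) A (crossmat a2)
                        (sq2 *s a2) (crossmat a1) (- transpose A)"

definition g2 :: "(complex^idx7^idx7) set" where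
  "g2 = {g2elt a1 a2 A | a1 a2 A. trace A = 0}"

definition coef :: "complex fls^idx7^idx7 \<Rightarrow> int \<Rightarrow> complex^idx7^idx7" where
  "coef L k = (\<chi> i j. fls_nth (L$i$j) k)"

definition mderiv :: "complex fls^idx7^idx7 \<Rightarrow> complex fls^idx7^idx7" where
  "mderiv L = (\<chi> i j. fls_deriv (L$i$j))"

definition gamma_adm :: "complex^3 \<Rightarrow> complex^3 \<Rightarrow> complex fls^idx7^idx7 \<Rightarrow> bool" where
  "gamma_adm \<alpha>1 \<alpha>2 L \<longleftrightarrow>
     (\<forall>k. coef L k \<in> g2) \<and>
     (\<forall>k < -2. coef L k = 0) \<and>
     (\<exists>\<mu>. coef L (-2) = blk 0 0 0 0 (outer (\<mu> *s \<alpha>1) \<alpha>2) 0 0 0 (- outer (\<mu> *s \<alpha>2) \<alpha>1)) \<and>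
     (\<exists>\<beta>01 \<beta>02 \<beta>1 \<beta>2. dotc \<alpha>1 \<beta>2 = 0 \<and> dotc \<alpha>2 \<beta>1 = 0 \<and>
        coef L (-1) = blk 0 (- ((sq2 * \<beta>02) *s \<alpha>2)) (- ((sq2 * \<beta>01) *s \<alpha>1))
                          ((sq2 * \<beta>01) *s \<alpha>1) (outer \<alpha>1 \<beta>2 - outer \<beta>1 \<alpha>2) (crossmat (\<beta>02 *s \<alpha>2))
                          ((sq2 * \<beta>02) *s \<alpha>2) (crossmat (\<beta>01 *s \<alpha>1)) (outer \<alpha>2 \<beta>1 - outer \<beta>2 \<alpha>1)) \<and>
     (\<exists>a1 a2 A \<kappa>1 \<kappa>2. trace A = 0 \<and> coef L 0 = g2elt a1 a2 A \<and>
        dotc \<alpha>1 a2 = 0 \<and> dotc \<alpha>2 a1 = 0 \<and>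
        A *v \<alpha>1 = \<kappa>1 *s \<alpha>1 \<and> (- transpose A) *v \<alpha>2 = \<kappa>2 *s \<alpha>2) \<and>
     dotc \<alpha>2 (blk22 (coef L 1) *v \<alpha>1) = 0"

definition kappa1 :: "complex^3 \<Rightarrow> complex fls^idx7^idx7 \<Rightarrow> complex" where
  "kappa1 \<alpha>1 L = (THE \<kappa>. blk22 (coef L 0) *v \<alpha>1 = \<kappa> *s \<alpha>1)"

definition kappa2 :: "complex^3 \<Rightarrow> complex fls^idx7^idx7 \<Rightarrow> complex" where
  "kappa2 \<alpha>2 L = (THE \<kappa>. (- transpose (blk22 (coef L 0))) *v \<alpha>2 = \<kappa> *s \<alpha>2)"

end

theory Submission
  imports Defs
begin

lemma sum_plus: "sum (f :: ('b::finite + 'c::finite) \<Rightarrow> 'a::comm_monoid_add) UNIV = (\<Sum>q\<in>UNIV. f (Inl q)) + (\<Sum>q\<in>UNIV. f (Inr q))"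
proof -
  have "sum f UNIV = sum f (Inl ` UNIV) + sum f (Inr ` UNIV)"
    by (subst UNIV_Plus_UNIV[symmetric], unfold Plus_def, rule sum.union_disjoint) auto
  also have "\<dots> = (\<Sum>q\<in>UNIV. f (Inl q)) + (\<Sum>q\<in>UNIV. f (Inr q))"
    by (simp add: sum.reindex)
  finally show ?thesis .
qed

lemma sum_idx7: "sum (f :: idx7 \<Rightarrow> 'a::comm_monoid_add) UNIV = f (Inl ()) + (\<Sum>q\<in>UNIV. f (Inr (Inl q))) + (\<Sum>q\<in>UNIV. f (Inr (Inr q)))"
  by (simp add: sum_plus UNIV_unit add.assoc)

lemma sq2sq: "sq2 * sq2 = 2"
  unfolding of_real_mult[symmetric] by simp

lemmas cs = dotc_def outer_def crossmat_def sum_3 vec_eq_iff forall_3 matrix_matrix_mult_def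
   matrix_vector_mult_def transpose_def trace_def

lemma dotc_sym: "dotc x y = dotc y x" by (simp add: cs algebra_simps)

lemma blk_mult_22: "(blk c r1 r2 c1 M11 M12 c2 M21 M22 ** blk d s1 s2 d1 N11 N12 d2 N21 N22) $ Inr (Inl p) $ Inr (Inl q)
   = c1$p * s1$q + (M11 ** N11)$p$q + (M12 ** N21)$p$q"
  by (simp add: matrix_matrix_mult_def sum_idx7 blk_def)

lemma blk_trace: "trace (blk c r1 r2 c1 M11 M12 c2 M21 M22 ** blk d s1 s2 d1 N11 N12 d2 N21 N22)
   = c*d + dotc r1 d1 + dotc r2 d2 + dotc c1 s1 + trace (M11 ** N11) + trace (M12 ** N21)
     + dotc c2 s2 + trace (M21 ** N12) + trace (M22 ** N22)"
  by (simp add: trace_def matrix_matrix_mult_def sum_idx7 blk_def dotc_def sum.distrib)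

lemma trcc: "trace (crossmat b ** crossmat c) = -2 * dotc b c"
  by (simp add: cs algebra_simps)
lemma trTT: "trace ((- transpose A) ** (- transpose B)) = trace ((A::complex^3^3) ** B)"
  by (simp add: cs algebra_simps)

lemma G1: "trace (g2elt a b A ** g2elt c d B) = 2*trace(A**B) - 6*(dotc a d + dotc b c)"
proof -
  have "dotc (- (sq2 *s b)) (sq2 *s c) = -2 * dotc b c" for b c
    by (simp add: dotc_def sum_distrib_left algebra_simps sq2sq flip: sum_negf)
  moreover have "dotc (sq2 *s a) (- (sq2 *s d)) = -2 * dotc a d" for a d
    by (simp add: dotc_def sum_distrib_left algebra_simps sq2sq flip: sum_negf)
  ultimately show ?thesis
    unfolding g2elt_def blk_trace by (simp add: trcc trTT dotc_sym[of d a] dotc_sym[of c b])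
qed

lemma G2: "blk22 (g2elt a b A ** g2elt c d B) = A ** B - outer (2 *s a) d + crossmat b ** crossmat c"
  unfolding g2elt_def by (simp add: blk22_def vec_eq_iff blk_mult_22 outer_def sq2sq algebra_simps)

lemma blk22_g2elt[simp]: "blk22 (g2elt a b A) = A"
  by (simp add: blk22_def g2elt_def blk_def vec_eq_iff)

lemma V1: "(crossmat b ** crossmat c) *v w = dotc b w *s c - dotc b c *s w"
  by (simp add: cs algebra_simps)
lemma V3: "transpose (crossmat b ** crossmat c) *v w = dotc c w *s b - dotc b c *s w"
  by (simp add: cs algebra_simps)
lemma V2: "outer x y *v w = dotc y w *s x"
  by (simp add: cs algebra_simps)
lemma V4: "transpose (outer x y) = outer y x"
  by (simp add: cs algebra_simps)
lemma V5: "dotc x (transpose B *v y) = dotc (B *v x) y"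
  by (simp add: cs algebra_simps)
lemma V6: "trace (outer x y ** B) = dotc y (B *v x)"
  by (simp add: cs algebra_simps)
lemma V7: "transpose (A ** B) = transpose B ** transpose (A::complex^3^3)"
  by (simp add: cs algebra_simps)
lemma V8: "(A::complex^3^3) *v (c *s x) = c *s (A *v x)"
  by (simp add: cs algebra_simps)
lemma dotc_simps: "dotc (c *s x) y = c * dotc x y" "dotc x (c *s y) = c * dotc x y"
  "dotc (x + y) z = dotc x z + dotc y z" "dotc (x - y) z = dotc x z - dotc y z"
  "dotc z (x + y) = dotc z x + dotc z y" "dotc z (x - y) = dotc z x - dotc z y"
  "dotc 0 z = 0" "dotc z 0 = 0" "dotc (-x) z = - dotc x z" "dotc z (-x) = - dotc z x"
  by (simp_all add: cs algebra_simps)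
lemma trace_comm: "trace ((A::complex^'n^'n) ** B) = trace (B ** A)"
  by (simp add: trace_def matrix_matrix_mult_def, subst sum.swap, simp add: mult.commute)

lemma blk22_diff: "blk22 (X - Y) = blk22 X - blk22 Y" by (simp add: blk22_def vec_eq_iff)
lemma tr_diff: "transpose (A - B) = transpose A - transpose (B::'a::ring^'n^'m)" by (simp add: transpose_def vec_eq_iff)
lemma tr_add: "transpose (A + B) = transpose A + transpose (B::'a::ring^'n^'m)" by (simp add: transpose_def vec_eq_iff)
lemma tr_neg: "transpose (- A) = - transpose (A::'a::ring^'n^'m)" by (simp add: transpose_def vec_eq_iff)
lemma tr_cross: "transpose (crossmat x) = - crossmat x" by (simp add: cs)
lemma cc: "crossmat b *v (crossmat c *v w) = dotc b w *s c - dotc b c *s w"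
  by (simp add: cs algebra_simps)
lemma mv_lin: "(A::complex^3^3) *v (x + y) = A *v x + A *v y" "(A::complex^3^3) *v (x - y) = A *v x - A *v y"
  "(A::complex^3^3) *v (- y) = - (A *v y)" "(A::complex^3^3) *v 0 = 0"
  "(A + B) *v w = A *v w + B *v w" "(A - B) *v w = A *v w - B *v w" "(- B) *v w = - (B *v w)"
  "(A ** B) *v w = A *v (B *v w)" "(0::complex^3^3) *v w = 0"
  by (simp_all add: cs algebra_simps sum_negf sum.distrib sum_subtractf)

lemma dvB: "dotc x (y v* B) = dotc y (B *v x)" "dotc (y v* B) x = dotc y (B *v x)"
  by (simp_all add: cs vector_matrix_mult_def algebra_simps)
lemmas VS = dvB blk22_diff G2 tr_diff tr_add tr_neg V7 V4 tr_cross V2 cc mv_lin V8 dotc_simps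

lemma vec_fin: "(x::complex^3) = y \<Longrightarrow> x = y" by simp

lemma termN:
  fixes \<mu> :: complex and c d \<alpha>1 \<alpha>2 :: "complex^3" and B :: "complex^3^3"
  assumes h: "dotc \<alpha>1 \<alpha>2 = 0"
  defines "N \<equiv> g2elt 0 0 (outer (\<mu> *s \<alpha>1) \<alpha>2)" and "Z \<equiv> g2elt c d B"
  shows "blk22 (N**Z - Z**N) *v \<alpha>1 = (\<mu> * dotc \<alpha>2 (B *v \<alpha>1)) *s \<alpha>1"
   "- transpose (blk22 (N**Z - Z**N)) *v \<alpha>2 = (\<mu>*dotc \<alpha>2 (B*v\<alpha>1)) *s \<alpha>2"
   "trace (N ** Z) = 2*\<mu>*dotc \<alpha>2 (B *v \<alpha>1)"
proof -
  have h': "dotc \<alpha>2 \<alpha>1 = 0" using h dotc_sym by metis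
  show "blk22 (N**Z - Z**N) *v \<alpha>1 = (\<mu> * dotc \<alpha>2 (B *v \<alpha>1)) *s \<alpha>1"
    unfolding N_def Z_def
    by (simp add: VS h h'; simp add: vec_eq_iff algebra_simps dotc_def sum_3 matrix_vector_mult_def)
  show "- transpose (blk22 (N**Z - Z**N)) *v \<alpha>2 = (\<mu>*dotc \<alpha>2 (B*v\<alpha>1)) *s \<alpha>2"
    unfolding N_def Z_def
    by (simp add: VS h h'; simp add: vec_eq_iff algebra_simps dotc_def sum_3 matrix_vector_mult_def)
  show "trace (N ** Z) = 2*\<mu>*dotc \<alpha>2 (B *v \<alpha>1)"
    unfolding N_def Z_def
    apply (simp add: G1 V6 VS)
    done
qed

lemma termR:
  fixes b01 b02 :: complex and c d \<alpha>1 \<alpha>2 b1 b2 :: "complex^3" and B :: "complex^3^3"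
  assumes h: "dotc \<alpha>1 \<alpha>2 = 0" "dotc \<alpha>1 b2 = 0" "dotc \<alpha>2 b1 = 0"
  defines "R \<equiv> g2elt (b01 *s \<alpha>1) (b02 *s \<alpha>2) (outer \<alpha>1 b2 - outer b1 \<alpha>2)" and "Z \<equiv> g2elt c d B"
  shows "dotc \<alpha>2 (B *v \<alpha>1) = 0 \<Longrightarrow> blk22 (R**Z - Z**R) *v \<alpha>1 = (dotc b2 (B*v\<alpha>1) - 2*b01*dotc d \<alpha>1 - b02*dotc \<alpha>2 c) *s \<alpha>1"
   "dotc \<alpha>2 (B *v \<alpha>1) = 0 \<Longrightarrow> - transpose (blk22 (R**Z - Z**R)) *v \<alpha>2 = (- dotc \<alpha>2 (B *v b1) - 2*b02*dotc \<alpha>2 c - b01*dotc d \<alpha>1) *s \<alpha>2"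
   "trace (R ** Z) = 2*(dotc b2 (B*v\<alpha>1) - dotc \<alpha>2 (B*v b1)) - 6*(b01*dotc d \<alpha>1 + b02*dotc \<alpha>2 c)"
proof -
  have h': "dotc \<alpha>2 \<alpha>1 = 0" "dotc b2 \<alpha>1 = 0" "dotc b1 \<alpha>2 = 0" using h dotc_sym by metis+
  show "dotc \<alpha>2 (B *v \<alpha>1) = 0 \<Longrightarrow> blk22 (R**Z - Z**R) *v \<alpha>1 = (dotc b2 (B*v\<alpha>1) - 2*b01*dotc d \<alpha>1 - b02*dotc \<alpha>2 c) *s \<alpha>1"
    unfolding R_def Z_def
    by (simp add: VS h h'; simp add: vec_eq_iff algebra_simps dotc_def sum_3 matrix_vector_mult_def)
  show "dotc \<alpha>2 (B *v \<alpha>1) = 0 \<Longrightarrow> - transpose (blk22 (R**Z - Z**R)) *v \<alpha>2 = (- dotc \<alpha>2 (B *v b1) - 2*b02*dotc \<alpha>2 c - b01*dotc d \<alpha>1) *s \<alpha>2"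
    unfolding R_def Z_def
    by (simp add: VS h h'; simp add: vec_eq_iff algebra_simps dotc_def sum_3 matrix_vector_mult_def)
  show "trace (R ** Z) = 2*(dotc b2 (B*v\<alpha>1) - dotc \<alpha>2 (B*v b1)) - 6*(b01*dotc d \<alpha>1 + b02*dotc \<alpha>2 c)"
    unfolding R_def Z_def
    apply (simp add: G1; simp add: cs algebra_simps)
    done
qed

lemma term0:
  fixes a b c d \<alpha>1 \<alpha>2 :: "complex^3" and A B :: "complex^3^3" and k1 k2 m1 m2 :: complex
  assumes h: "dotc \<alpha>1 b = 0" "dotc \<alpha>2 a = 0" "A *v \<alpha>1 = k1 *s \<alpha>1" "- transpose A *v \<alpha>2 = k2 *s \<alpha>2"
     "dotc \<alpha>1 d = 0" "dotc \<alpha>2 c = 0" "B *v \<alpha>1 = m1 *s \<alpha>1" "- transpose B *v \<alpha>2 = m2 *s \<alpha>2"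
  defines "X \<equiv> g2elt a b A" and "Y \<equiv> g2elt c d B"
  shows "blk22 (X**Y - Y**X) *v \<alpha>1 = (dotc d a - dotc b c) *s \<alpha>1"
   "- transpose (blk22 (X**Y - Y**X)) *v \<alpha>2 = (dotc b c - dotc d a) *s \<alpha>2"
proof -
  have h': "dotc b \<alpha>1 = 0" "dotc a \<alpha>2 = 0" "dotc d \<alpha>1 = 0" "dotc c \<alpha>2 = 0" using h dotc_sym by metis+
  have t: "\<alpha>2 v* A = (-k2) *s \<alpha>2" "\<alpha>2 v* B = (-m2) *s \<alpha>2" using h(4,8)
    by (auto simp: vec_eq_iff vector_matrix_mult_def matrix_vector_mult_def transpose_def sum_negf mult.commute minus_equation_iff)
  show "blk22 (X**Y - Y**X) *v \<alpha>1 = (dotc d a - dotc b c) *s \<alpha>1"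
    unfolding X_def Y_def
    by (simp add: VS h h' t; simp add: vec_eq_iff algebra_simps dotc_def sum_3 matrix_vector_mult_def)
  show "- transpose (blk22 (X**Y - Y**X)) *v \<alpha>2 = (dotc b c - dotc d a) *s \<alpha>2"
    unfolding X_def Y_def
    by (simp add: VS h h' t; simp add: vec_eq_iff algebra_simps dotc_def sum_3 matrix_vector_mult_def)
qed

unbundle fps_syntax

lemma fls_mult_window:
  fixes f g :: "'a::comm_ring_1 fls"
  assumes hf: "\<forall>k<a. f $$ k = 0" and hg: "\<forall>k<b. g $$ k = 0"
  shows "(f*g) $$ n = (\<Sum>i=a..n-b. f $$ i * g $$ (n-i))"
proof (cases "f = 0 \<or> g = 0")
  case True then show ?thesis by auto
next
  case False
  hence fg: "f \<noteq> 0" "g \<noteq> 0" by auto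
  have da: "a \<le> fls_subdegree f" using fls_subdegree_geI[OF fg(1)] hf by blast
  have db: "b \<le> fls_subdegree g" using fls_subdegree_geI[OF fg(2)] hg by blast
  have "(f*g) $$ n = (\<Sum>i=fls_subdegree f..n - fls_subdegree g. f $$ i * g $$ (n-i))"
    by (rule fls_times_nth(2))
  also have "\<dots> = (\<Sum>i=a..n-b. f $$ i * g $$ (n-i))"
  proof (rule sum.mono_neutral_left)
    show "finite {a..n - b}" by simp
    show "{fls_subdegree f..n - fls_subdegree g} \<subseteq> {a..n - b}" using da db by auto
    show "\<forall>i\<in>{a..n - b} - {fls_subdegree f..n - fls_subdegree g}. f  $$  i * g  $$  (n - i) = 0"
      by auto
  qed
  finally show ?thesis .
qed

lemma coef_mult_window:
  fixes L M :: "complex fls^idx7^idx7"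
  assumes hf: "\<forall>k<a. coef L k = 0" and hg: "\<forall>k<b. coef M k = 0"
  shows "coef (L ** M) n = (\<Sum>k=a..n-b. coef L k ** coef M (n-k))"
proof -
  have hf': "\<forall>k<a. L $ i $ j $$ k = 0" for i j using hf by (auto simp: coef_def vec_eq_iff)
  have hg': "\<forall>k<b. M $ i $ j $$ k = 0" for i j using hg by (auto simp: coef_def vec_eq_iff)
  show ?thesis
    apply (simp add: vec_eq_iff coef_def matrix_matrix_mult_def fls_nth_sum sum_component)
    apply (simp add: fls_mult_window[OF hf' hg'])
    apply (intro allI, rule sum.swap)
    done
qed

lemma coef_mderiv: "coef (mderiv M) m = (\<chi> i j. of_int (m+1) * coef M (m+1)  $ i $ j)"
  by (simp add: coef_def mderiv_def vec_eq_iff)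

lemma trace_coef: "(trace M)  $$  n = trace (coef M n)"
  by (simp add: trace_def coef_def fls_nth_sum)

lemma trace_sc: "trace ((X::complex^idx7^idx7) ** (\<chi> i j. c * Y $ i $ j)) = c * trace (X ** Y)"
  by (simp add: trace_def matrix_matrix_mult_def sum_distrib_left algebra_simps)

lemma coef_diff: "coef (A - B) n = coef A n - coef B n"
  by (simp add: coef_def vec_eq_iff)

lemma trace_sum: "trace (sum f A) = (\<Sum>k\<in>A. trace (f k :: complex^idx7^idx7))"
  by (simp add: trace_def sum_component, rule sum.swap)

lemma tr_res:
  fixes L M :: "complex fls^idx7^idx7"
  assumes hf: "\<forall>k < -2. coef L k = 0" and hg: "\<forall>k < -2. coef M k = 0"
  shows "(trace (L ** mderiv M))  $$  n = (\<Sum>k=-2..n+3. of_int (n-k+1) * trace (coef L k ** coef M (n-k+1)))"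
proof -
  have hg': "\<forall>k< -3. coef (mderiv M) k = 0" using hg by (auto simp: coef_mderiv vec_eq_iff)
  show ?thesis
    unfolding trace_coef coef_mult_window[OF hf hg'] 
    by (simp add: trace_sum coef_mderiv trace_sc)
qed

lemma crossmat0: "crossmat 0 = 0" by (simp add: cs)

lemma conv2: "blk 0 0 0 0 (outer (\<mu> *s \<alpha>1) \<alpha>2) 0 0 0 (- outer (\<mu> *s \<alpha>2) \<alpha>1) = g2elt 0 0 (outer (\<mu> *s \<alpha>1) \<alpha>2)"
proof -
  have "- transpose (outer (\<mu> *s \<alpha>1) \<alpha>2) = - outer (\<mu> *s \<alpha>2) \<alpha>1"
    by (simp add: cs algebra_simps)
  then show ?thesis by (simp add: g2elt_def crossmat0)
qed

lemma conv1: "blk 0 (- ((sq2 * b02) *s \<alpha>2)) (- ((sq2 * b01) *s \<alpha>1)) ((sq2 * b01) *s \<alpha>1) (outer \<alpha>1 b2 - outer b1 \<alpha>2) (crossmat (b02 *s \<alpha>2)) ((sq2 * b02) *s \<alpha>2) (crossmat (b01 *s \<alpha>1)) (outer \<alpha>2 b1 - outer b2 \<alpha>1) = g2elt (b01 *s \<alpha>1) (b02 *s \<alpha>2) (outer \<alpha>1 b2 - outer b1 \<alpha>2)"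
proof -
  have "- transpose (outer \<alpha>1 b2 - outer b1 \<alpha>2) = outer \<alpha>2 b1 - outer b2 \<alpha>1"
    by (simp add: cs algebra_simps)
  then show ?thesis by (simp add: g2elt_def vector_smult_assoc)
qed

lemma adm_data:
  assumes "gamma_adm \<alpha>1 \<alpha>2 L"
  obtains \<mu> b01 b02 b1 b2 a1 a2 A k1 k2 p q P r s Q where
   "\<forall>k < -2. coef L k = 0" "coef L (-2) = g2elt 0 0 (outer (\<mu> *s \<alpha>1) \<alpha>2)"
   "dotc \<alpha>1 b2 = 0" "dotc \<alpha>2 b1 = 0"
   "coef L (-1) = g2elt (b01 *s \<alpha>1) (b02 *s \<alpha>2) (outer \<alpha>1 b2 - outer b1 \<alpha>2)"
   "coef L 0 = g2elt a1 a2 A" "dotc \<alpha>1 a2 = 0" "dotc \<alpha>2 a1 = 0"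
   "A *v \<alpha>1 = k1 *s \<alpha>1" "- transpose A *v \<alpha>2 = k2 *s \<alpha>2"
   "coef L 1 = g2elt p q P" "dotc \<alpha>2 (P *v \<alpha>1) = 0" "coef L 2 = g2elt r s Q"
proof -
  note d = assms[unfolded gamma_adm_def]
  from d obtain \<mu> where m: "coef L (-2) = g2elt 0 0 (outer (\<mu> *s \<alpha>1) \<alpha>2)"
    using conv2 by metis
  from d obtain b01 b02 b1 b2 where b: "dotc \<alpha>1 b2 = 0" "dotc \<alpha>2 b1 = 0"
     "coef L (-1) = g2elt (b01 *s \<alpha>1) (b02 *s \<alpha>2) (outer \<alpha>1 b2 - outer b1 \<alpha>2)"
    using conv1 by metis
  from d obtain a1 a2 A k1 k2 where a: "coef L 0 = g2elt a1 a2 A" "dotc \<alpha>1 a2 = 0" "dotc \<alpha>2 a1 = 0"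
   "A *v \<alpha>1 = k1 *s \<alpha>1" "- transpose A *v \<alpha>2 = k2 *s \<alpha>2" by blast
  from d have "coef L 1 \<in> g2" by blast
  then obtain p q P where p: "coef L 1 = g2elt p q P" unfolding g2_def by blast
  with d have p2: "dotc \<alpha>2 (P *v \<alpha>1) = 0" by simp
  from d have "coef L 2 \<in> g2" by blast
  then obtain r s Q where r: "coef L 2 = g2elt r s Q" unfolding g2_def by blast
  from d have z: "\<forall>k < -2. coef L k = 0" by blast
  show ?thesis using that z m b a p p2 r by blast
qed

definition comm22 :: "complex^idx7^idx7 \<Rightarrow> complex^idx7^idx7 \<Rightarrow> complex^3^3" where
  "comm22 X Y = blk22 (X ** Y - Y ** X)"

lemma blk22_add: "blk22 (X + Y) = blk22 X + blk22 Y" by (simp add: blk22_def vec_eq_iff)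

lemma vm_lin: "(x::complex^3) v* (A + B) = x v* A + x v* B" "(x::complex^3) v* (A - B) = x v* A - x v* B"
  by (simp_all add: vec_eq_iff vector_matrix_mult_def sum.distrib sum_subtractf algebra_simps)

lemma negT: "((- transpose M) *v x = k *s x) \<longleftrightarrow> (x v* M = (-k) *s (x::complex^3))"
  by (auto simp: vec_eq_iff vector_matrix_mult_def matrix_vector_mult_def transpose_def sum_negf mult.commute minus_equation_iff)

lemma the_unique:
  assumes "(x::complex^3) \<noteq> 0" "v = K *s x"
  shows "(THE k. v = k *s x) = K"
proof (rule the_equality)
  show "v = K *s x" by fact
  fix k assume "v = k *s x"
  with assms(2) have e: "K *s x = k *s x" by metis
  from assms(1) obtain i where i: "x $ i \<noteq> 0" by (auto simp: vec_eq_iff)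
  have "K * x $ i = k * x $ i" using e by (metis vector_smult_component)
  with i show "k = K" by simp
qed

lemma int5: "{-2..2::int} = {-2,-1,0,1,2}" by auto
lemma int4: "{-2..1::int} = {-2,-1,0,1}" by auto
lemma int3: "{-2..0::int} = {-2,-1,0}" by auto
lemma int2: "{-2..-1::int} = {-2,-1}" by auto

theorem lemma5p2:
  fixes \<alpha>1 \<alpha>2 :: "complex^3" and L L' :: "complex fls^idx7^idx7"
  assumes "\<alpha>1 \<noteq> 0" and "\<alpha>2 \<noteq> 0" and "dotc \<alpha>1 \<alpha>2 = 0"
    and "gamma_adm \<alpha>1 \<alpha>2 L" and "gamma_adm \<alpha>1 \<alpha>2 L'"
  shows "fls_subdegree (trace (L ** mderiv L')) \<ge> -1 \<and>
         fls_residue (trace (L ** mderiv L')) =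
           2 * (kappa1 \<alpha>1 (L ** L' - L' ** L) + kappa2 \<alpha>2 (L ** L' - L' ** L))"
proof -
  note h = assms(3)
  have h': "dotc \<alpha>2 \<alpha>1 = 0" using h dotc_sym by metis
  obtain \<mu> b01 b02 b1 b2 a1 a2 A k1 k2 p q P r s Q where
   X: "\<forall>k < -2. coef L k = 0" "coef L (-2) = g2elt 0 0 (outer (\<mu> *s \<alpha>1) \<alpha>2)"
   "dotc \<alpha>1 b2 = 0" "dotc \<alpha>2 b1 = 0"
   "coef L (-1) = g2elt (b01 *s \<alpha>1) (b02 *s \<alpha>2) (outer \<alpha>1 b2 - outer b1 \<alpha>2)"
   "coef L 0 = g2elt a1 a2 A" "dotc \<alpha>1 a2 = 0" "dotc \<alpha>2 a1 = 0"
   "A *v \<alpha>1 = k1 *s \<alpha>1" "- transpose A *v \<alpha>2 = k2 *s \<alpha>2"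
   "coef L 1 = g2elt p q P" "dotc \<alpha>2 (P *v \<alpha>1) = 0" "coef L 2 = g2elt r s Q"
    by (rule adm_data[OF assms(4)])
  obtain \<mu>y c01 c02 c1 c2 e1 e2 E m1 m2 py qy Py ry sy Qy where
   Y: "\<forall>k < -2. coef L' k = 0" "coef L' (-2) = g2elt 0 0 (outer (\<mu>y *s \<alpha>1) \<alpha>2)"
   "dotc \<alpha>1 c2 = 0" "dotc \<alpha>2 c1 = 0"
   "coef L' (-1) = g2elt (c01 *s \<alpha>1) (c02 *s \<alpha>2) (outer \<alpha>1 c2 - outer c1 \<alpha>2)"
   "coef L' 0 = g2elt e1 e2 E" "dotc \<alpha>1 e2 = 0" "dotc \<alpha>2 e1 = 0"
   "E *v \<alpha>1 = m1 *s \<alpha>1" "- transpose E *v \<alpha>2 = m2 *s \<alpha>2"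
   "coef L' 1 = g2elt py qy Py" "dotc \<alpha>2 (Py *v \<alpha>1) = 0" "coef L' 2 = g2elt ry sy Qy"
    by (rule adm_data[OF assms(5)])
  note eqs = X(2,5,6,11,13) Y(2,5,6,11,13)
  note tN = termN(3)[OF h]
  note tR = termR(3)[OF h X(3,4)] termR(3)[OF h Y(3,4)]
  have E0: "dotc \<alpha>2 (A *v \<alpha>1) = 0" "dotc \<alpha>2 (E *v \<alpha>1) = 0"
    using X(9) Y(9) h' by (simp_all add: dotc_simps)
  have E0t: "dotc \<alpha>2 (A *v b) = - k2 * dotc \<alpha>2 b" "dotc \<alpha>2 (E *v b) = - m2 * dotc \<alpha>2 b" for b
  proof -
    have "\<alpha>2 v* A = (-k2) *s \<alpha>2" "\<alpha>2 v* E = (-m2) *s \<alpha>2" using X(10) Y(10) negT by blast+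
    then show "dotc \<alpha>2 (A *v b) = - k2 * dotc \<alpha>2 b" "dotc \<alpha>2 (E *v b) = - m2 * dotc \<alpha>2 b"
      by (metis dvB(2) dotc_simps(1))+
  qed
  have res: "(trace (L ** mderiv L')) $$ (-1) = 2 * trace (coef L (-2) ** coef L' 2) + trace (coef L (-1) ** coef L' 1)
      - trace (coef L' (-1) ** coef L 1) - 2 * trace (coef L' (-2) ** coef L 2)"
    unfolding tr_res[OF X(1) Y(1)] by (simp add: int5 trace_comm[of "coef L 1"] trace_comm[of "coef L 2"])
  have low: "(trace (L ** mderiv L')) $$ n = 0" if "n < -1" for n
  proof -
    have c: "n = -5 \<or> n = -4 \<or> n = -3 \<or> n = -2 \<or> n < -5" using that by arith
    have s: "dotc b2 \<alpha>1 = 0" "dotc b1 \<alpha>2 = 0" "dotc a2 \<alpha>1 = 0" "dotc a1 \<alpha>2 = 0"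
        "dotc c2 \<alpha>1 = 0" "dotc c1 \<alpha>2 = 0" "dotc e2 \<alpha>1 = 0" "dotc e1 \<alpha>2 = 0"
      using X(3,4,7,8) Y(3,4,7,8) dotc_sym by metis+
    note TC = trace_comm[of "coef L 0" "coef L' (-2)"] trace_comm[of "coef L (-1)" "coef L' (-2)"]
       trace_comm[of "coef L 0" "coef L' (-1)"] trace_comm[of "coef L 1" "coef L' (-2)"]
    from c show ?thesis
      by (elim disjE; simp add: tr_res[OF X(1) Y(1)] int2 int3 int4 TC;
          simp add: eqs tN tR VS X Y h h' E0 E0t s)
  qed
  have sub: "fls_subdegree (trace (L ** mderiv L')) \<ge> -1"
  proof (cases "trace (L ** mderiv L') = 0")
    case True then show ?thesis by simp
  next
    case False then show ?thesis by (rule fls_subdegree_geI) (simp add: low)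
  qed
  define C where "C = L ** L' - L' ** L"
  have dec: "blk22 (coef C 0) = comm22 (coef L (-2)) (coef L' 2) + comm22 (coef L (-1)) (coef L' 1)
     + comm22 (coef L 0) (coef L' 0) - comm22 (coef L' (-1)) (coef L 1) - comm22 (coef L' (-2)) (coef L 2)"
    unfolding C_def coef_diff coef_mult_window[OF X(1) Y(1)] coef_mult_window[OF Y(1) X(1)]
    by (simp add: int5 comm22_def blk22_add blk22_diff algebra_simps)
  note cN = termN(1,2)[OF h, folded comm22_def]
  note cR = termR(1,2)[OF h X(3,4), folded comm22_def] termR(1,2)[OF h Y(3,4), folded comm22_def]
  note c0 = term0[OF X(7,8,9,10) Y(7,8,9,10), folded comm22_def]
  define K1 where "K1 = \<mu>*dotc \<alpha>2 (Qy*v\<alpha>1) + (dotc b2 (Py*v\<alpha>1) - 2*b01*dotc qy \<alpha>1 - b02*dotc \<alpha>2 py)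
     + (dotc e2 a1 - dotc a2 e1) - (dotc c2 (P*v\<alpha>1) - 2*c01*dotc q \<alpha>1 - c02*dotc \<alpha>2 p) - \<mu>y*dotc \<alpha>2 (Q*v\<alpha>1)"
  define K2 where "K2 = \<mu>*dotc \<alpha>2 (Qy*v\<alpha>1) + (- dotc \<alpha>2 (Py*v b1) - 2*b02*dotc \<alpha>2 py - b01*dotc qy \<alpha>1)
     + (dotc a2 e1 - dotc e2 a1) - (- dotc \<alpha>2 (P*v c1) - 2*c02*dotc \<alpha>2 p - c01*dotc q \<alpha>1) - \<mu>y*dotc \<alpha>2 (Q*v\<alpha>1)"
  have v1: "blk22 (coef C 0) *v \<alpha>1 = K1 *s \<alpha>1"
    unfolding dec eqs K1_def
    by (simp add: mv_lin cN cR c0 X(12) Y(12); simp add: vec_eq_iff algebra_simps)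
  have cN': "\<alpha>2 v* comm22 (g2elt 0 0 (outer (m *s \<alpha>1) \<alpha>2)) (g2elt c d B) = (- (m * dotc \<alpha>2 (B *v \<alpha>1))) *s \<alpha>2" for m c d B
    using cN(2) negT by blast
  have cR': "\<alpha>2 v* comm22 (g2elt (b01 *s \<alpha>1) (b02 *s \<alpha>2) (outer \<alpha>1 b2 - outer b1 \<alpha>2)) (g2elt c d B)
      = (- (- dotc \<alpha>2 (B *v b1) - 2*b02*dotc \<alpha>2 c - b01*dotc d \<alpha>1)) *s \<alpha>2"
    if "dotc \<alpha>2 (B *v \<alpha>1) = 0" for c d B
    using cR(2)[OF that] negT by blast
  have cR'': "\<alpha>2 v* comm22 (g2elt (c01 *s \<alpha>1) (c02 *s \<alpha>2) (outer \<alpha>1 c2 - outer c1 \<alpha>2)) (g2elt c d B)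
      = (- (- dotc \<alpha>2 (B *v c1) - 2*c02*dotc \<alpha>2 c - c01*dotc d \<alpha>1)) *s \<alpha>2"
    if "dotc \<alpha>2 (B *v \<alpha>1) = 0" for c d B
    using cR(4)[OF that] negT by blast
  have c0': "\<alpha>2 v* comm22 (g2elt a1 a2 A) (g2elt e1 e2 E) = (- (dotc a2 e1 - dotc e2 a1)) *s \<alpha>2"
    using c0(2) negT by blast
  have v2: "- transpose (blk22 (coef C 0)) *v \<alpha>2 = K2 *s \<alpha>2"
    unfolding negT dec eqs K2_def
    by (simp add: vm_lin cN' cR' cR'' c0' X(12) Y(12); simp add: vec_eq_iff algebra_simps)
  have k1: "kappa1 \<alpha>1 C = K1" unfolding kappa1_def by (rule the_unique[OF assms(1) v1])
  have k2: "kappa2 \<alpha>2 C = K2" unfolding kappa2_def by (rule the_unique[OF assms(2) v2])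
  have r: "fls_residue (trace (L ** mderiv L')) = 2 * (K1 + K2)"
    unfolding fls_residue_def res eqs K1_def K2_def
    by (simp add: tN tR; simp add: algebra_simps)
  show ?thesis using sub r k1 k2 unfolding C_def by simp
qed

end
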